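(* Let $d\geq1$ be an integer and, for real $n>d/2$ and $u\in[0,+\infty)$, let $$\mathscr A_{nd}(u):=(1+4u)^n\int_{1/4}^{1}ds\,\frac{s^{n-1}}{\sqrt{1-s}\,(1+us)^{2n-d/2}}.$$ Then for all $n>d/2$, $$\sup_{u\in[0,+\infty)}\mathscr A_{nd}(u)\leq A_{nd}:=2^{2n-d/2}\,\frac{(1-\frac{d}{2n})^{n-d/2}}{(1-\frac{d}{4n})^{2n-d/2}}\int_{1/4}^1ds\,\frac{1}{s\sqrt{1-s}\,(4-s)^{n-d/2}}.$$ Moreover, for fixed $d$ and $n\to+\infty$, $$A_{nd}=\sqrt\pi\,\frac{3^{d/2+1/2}}{2^{d/2}\sqrt n}\Big(\frac43\Big)^n\Big[1+O(\tfrac1n)\Big].$$ *)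

theory Defs
  imports "HOL-Analysis.Analysis" "HOL-Library.Landau_Symbols"
begin

definition scrA :: "real \<Rightarrow> nat \<Rightarrow> real \<Rightarrow> real" where
  "scrA n d u = (1 + 4*u) powr n *
     integral {1/4 .. 1::real} (\<lambda>t. t powr (n - 1) /
        (sqrt (1 - t) * (1 + u*t) powr (2*n - real d / 2)))"

definition bigA :: "real \<Rightarrow> nat \<Rightarrow> real" where
  "bigA n d = 2 powr (2*n - real d / 2) *
     ((1 - real d / (2*n)) powr (n - real d / 2) /
      (1 - real d / (4*n)) powr (2*n - real d / 2)) *
     integral {1/4 .. 1::real} (\<lambda>s. 1 / (s * sqrt (1 - s) * (4 - s) powr (n - real d / 2)))"

definition mainA :: "real \<Rightarrow> nat \<Rightarrow> real" where
  "mainA n d = sqrt pi * 3 powr (real d / 2 + 1/2) / (2 powr (real d / 2) * sqrt n)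
     * (4/3) powr n"

end

theory Submission
  imports Defs "HOL-Real_Asymp.Real_Asymp"
begin


lemma gamma_scaled:
  fixes a c :: real
  assumes a: "a > -1" and c: "c > 0"
  shows "((\<lambda>x. x powr a * exp (-(c*x))) has_integral Gamma (a+1) / c powr (a+1)) {0..}"
proof -
  let ?f = "\<lambda>t::real. t powr a / exp t"
  have G: "(?f has_integral Gamma (a+1)) {0..}"
    using Gamma_integral_real[of "a+1"] a by simp
  have fa: "?f absolutely_integrable_on {0..}"
    by (rule nonnegative_absolutely_integrable) (use G in auto)
  have img: "(\<lambda>x. c*x) ` {0..} = {0::real..}"
  proof
    show "{0..} \<subseteq> (\<lambda>x. c*x) ` {0..}"
    proof
      fix y :: real assume "y \<in> {0..}"
      then have "y = c * (y/c)" "y/c \<in> {0..}" using c by auto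
      then show "y \<in> (\<lambda>x. c*x) ` {0..}" by blast
    qed
  qed (use c in auto)
  have "(\<lambda>x. \<bar>c\<bar> * ?f (c*x)) absolutely_integrable_on {0..} \<and>
           integral {0..} (\<lambda>x. \<bar>c\<bar> * ?f (c*x)) = Gamma (a+1)"
    apply (rule has_absolute_integral_change_of_variables_1'[where g="\<lambda>x. c*x" and g'="\<lambda>_. c" and f="?f" and S="{0..}", THEN iffD2])
    using c fa G img by (auto intro!: derivative_eq_intros inj_onI simp: integral_unique)
  then have H: "((\<lambda>x. c * ?f (c*x)) has_integral Gamma (a+1)) {0..}"
    using c by (auto simp: has_integral_iff absolutely_integrable_on_def)
  have eq: "c * ?f (c*x) = c powr (a+1) * (x powr a * exp (-(c*x)))" if "x \<in> {0..}" for x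
    using c that by (simp add: powr_mult powr_add exp_minus field_simps)
  have "((\<lambda>x. c powr (a+1) * (x powr a * exp (-(c*x)))) has_integral Gamma (a+1)) {0..}"
    using has_integral_spike_finite_eq[of "{}"] H eq
    by (metis (no_types, lifting) has_integral_cong)
  from has_integral_mult_right[OF this, of "1 / c powr (a+1)"]
  show ?thesis using c by simp
qed





definition gK :: "real \<Rightarrow> real \<Rightarrow> real" where
  "gK k x = x powr (-1/2) * (1+x) powr (-k) / (1 - 3*x)"

lemma exp_le_aux: "y \<ge> 0 \<Longrightarrow> exp (y::real) \<le> 1 + y * exp y"
proof -
  assume "y \<ge> 0"
  have "1 - y \<le> exp (-y)" using exp_ge_add_one_self[of "-y"] by simp
  then have "(1 - y) * exp y \<le> exp (-y) * exp y" by (simp add: mult_right_mono)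
  then show ?thesis by (simp add: exp_minus field_simps)
qed

lemma pw_lower:
  assumes k: "k > 0" and x: "0 < x" "x \<le> 1/4"
  shows "x powr (-1/2) * exp (-(k*x)) \<le> gK k x"
proof -
  have "ln (1+x) \<le> x" using x by (intro ln_add_one_self_le_self) auto
  then have "exp (-(k*x)) \<le> exp (-k * ln (1+x))" using k by (simp add: mult_left_mono)
  also have "\<dots> = (1+x) powr (-k)" using x by (simp add: powr_def)
  finally have A: "exp (-(k*x)) \<le> (1+x) powr (-k)" .
  have B: "0 < 1 - 3*x" "1 - 3*x \<le> 1" using x by auto
  have "x powr (-1/2) * exp (-(k*x)) \<le> x powr (-1/2) * (1+x) powr (-k)"
    using A by (simp add: mult_left_mono)
  also have "\<dots> \<le> x powr (-1/2) * (1+x) powr (-k) / (1 - 3*x)"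
    using B by (simp add: le_divide_eq mult_left_le)
  finally show ?thesis by (simp add: gK_def)
qed

lemma pw_upper:
  assumes k: "k > 0" and x: "0 < x" "x \<le> 1/4"
  shows "gK k x \<le> x powr (-1/2) * exp (-(k*x)) + 12 * (x powr (1/2) * exp (-(k*x)))
          + 4*k * (x powr (3/2) * exp (-((3*k/4)*x)))"
proof -
  have "x - x\<^sup>2 \<le> ln (1+x)" using x by (intro ln_one_plus_pos_lower_bound) auto
  then have "k*(x - x\<^sup>2) \<le> k*ln (1+x)" using k by (intro mult_left_mono) auto
  then have "(1+x) powr (-k) \<le> exp (-k*x + k*x\<^sup>2)"
    using x k by (simp add: powr_def algebra_simps)
  also have "\<dots> = exp (-(k*x)) * exp (k*x\<^sup>2)" by (simp only: exp_add[symmetric]) simp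
  also have "\<dots> \<le> exp (-(k*x)) * (1 + k*x\<^sup>2 * exp (k*x\<^sup>2))"
    using exp_le_aux[of "k*x\<^sup>2"] k by (intro mult_left_mono) auto
  also have "\<dots> = exp (-(k*x)) + k*x\<^sup>2 * exp (-(k*x) + k*x\<^sup>2)"
    by (simp only: exp_add) (simp add: algebra_simps)
  also have "\<dots> \<le> exp (-(k*x)) + k*x\<^sup>2 * exp (-((3*k/4)*x))"
  proof -
    have "k*x\<^sup>2 \<le> k*x/4" using k x by (simp add: power2_eq_square mult_left_mono)
    then have "exp (-(k*x) + k*x\<^sup>2) \<le> exp (-((3*k/4)*x))" by simp
    then show ?thesis using k by (simp add: mult_left_mono)
  qed
  finally have A: "(1+x) powr (-k) \<le> exp (-(k*x)) + k*x\<^sup>2 * exp (-((3*k/4)*x))" .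
  have B: "1 / (1 - 3*x) \<le> 1 + 12*x" using x by (simp add: field_simps)
  have p0: "x powr (-1/2) \<ge> 0" by simp
  have "gK k x = x powr (-1/2) * (1+x) powr (-k) * (1 / (1 - 3*x))" by (simp add: gK_def)
  also have "\<dots> \<le> x powr (-1/2) * (exp (-(k*x)) + k*x\<^sup>2 * exp (-((3*k/4)*x))) * (1 + 12*x)"
    using A B x p0 k by (intro mult_mono mult_left_mono) auto
  also have "\<dots> = x powr (-1/2) * exp (-(k*x)) + 12 * ((x * x powr (-1/2)) * exp (-(k*x)))
          + k * (1 + 12*x) * ((x\<^sup>2 * x powr (-1/2)) * exp (-((3*k/4)*x)))"
    by (simp add: algebra_simps)
  also have "x * x powr (-1/2) = x powr (1/2)" using x powr_add[of x 1 "-1/2"] by simp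
  also have "x\<^sup>2 * x powr (-1/2) = x powr (3/2)" using x powr_add[of x 2 "-1/2"]
    by (simp add: powr_numeral)
  also have "k * (1 + 12*x) * (x powr (3/2) * exp (-((3*k/4)*x))) \<le> 4*k * (x powr (3/2) * exp (-((3*k/4)*x)))"
    using k x by (intro mult_right_mono) auto
  finally show ?thesis by simp
qed



lemma borel_to_lebesgue_on:
  fixes f :: "'a::euclidean_space \<Rightarrow> 'b::euclidean_space"
  assumes "f \<in> borel_measurable borel" shows "f \<in> borel_measurable (lebesgue_on S)"
  using measurable_compose[OF id_borel_measurable_lebesgue_on assms] by (simp only: id_def)

lemma gK_nonneg: "0 \<le> x \<Longrightarrow> x \<le> 1/4 \<Longrightarrow> gK k x \<ge> 0"
  by (simp add: gK_def)

lemma K_bounds: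
  assumes k: "k > 0"
  shows "gK k integrable_on {0..1/4}"
    "integral {0..1/4} (gK k) \<ge> Gamma (1/2) / k powr (1/2) - 4 * (Gamma (3/2) / k powr (3/2))"
    "integral {0..1/4} (gK k) \<le> Gamma (1/2) / k powr (1/2) + 12 * (Gamma (3/2) / k powr (3/2))
        + 4*k * (Gamma (5/2) / (3*k/4) powr (5/2))"
proof -
  define G where "G x = (if x \<in> {0..1/4::real} then gK k x else 0)" for x
  define U where "U x = x powr (-1/2) * exp (-(k*x)) + 12 * (x powr (1/2) * exp (-(k*x)))
          + 4*k * (x powr (3/2) * exp (-((3*k/4)*x)))" for x
  define L where "L x = x powr (-1/2) * exp (-(k*x)) - 4 * (x powr (1/2) * exp (-(k*x)))" for x
  have g1: "((\<lambda>x. x powr (-1/2) * exp (-(k*x))) has_integral Gamma (1/2) / k powr (1/2)) {0..}"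
    using gamma_scaled[of "-1/2" k] k by simp
  have g2: "((\<lambda>x. x powr (1/2) * exp (-(k*x))) has_integral Gamma (3/2) / k powr (3/2)) {0..}"
    using gamma_scaled[of "1/2" k] k by simp
  have g3: "((\<lambda>x. x powr (3/2) * exp (-((3*k/4)*x))) has_integral Gamma (5/2) / (3*k/4) powr (5/2)) {0..}"
    using gamma_scaled[of "3/2" "3*k/4"] k by simp
  have HU: "(U has_integral (Gamma (1/2) / k powr (1/2) + 12 * (Gamma (3/2) / k powr (3/2))
        + 4*k * (Gamma (5/2) / (3*k/4) powr (5/2)))) {0..}"
    unfolding U_def by (intro has_integral_add has_integral_mult_right g1 g2 g3)
  have HL: "(L has_integral (Gamma (1/2) / k powr (1/2) - 4 * (Gamma (3/2) / k powr (3/2)))) {0..}"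
    unfolding L_def by (intro has_integral_diff has_integral_mult_right g1 g2)
  have pw: "L x \<le> G x \<and> \<bar>G x\<bar> \<le> U x" if x: "x \<in> {0..}" for x
  proof (cases "x = 0")
    case True then show ?thesis by (simp add: L_def G_def U_def gK_def)
  next
    case False
    then have xp: "x > 0" using x by auto
    have U0: "U x \<ge> 0" unfolding U_def using k by (intro add_nonneg_nonneg mult_nonneg_nonneg) auto
    show ?thesis
    proof (cases "x \<le> 1/4")
      case True
      have "L x \<le> x powr (-1/2) * exp (-(k*x))" unfolding L_def by simp
      also have "\<dots> \<le> gK k x" by (rule pw_lower[OF k xp True])
      finally have "L x \<le> G x" using True xp by (simp add: G_def)
      moreover have "\<bar>G x\<bar> \<le> U x" using True xp gK_nonneg[of x k] pw_upper[OF k xp True]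
        by (simp add: G_def U_def)
      ultimately show ?thesis by simp
    next
      case False
      have "x powr (-1/2) \<le> 4 * x powr (1/2)"
      proof -
        have "x powr (1/2) = x * x powr (-1/2)" using xp powr_add[of x 1 "-1/2"] by simp
        moreover have "x powr (-1/2) \<ge> 0" by simp
        ultimately show ?thesis using False by (simp add: mult_right_mono)
      qed
      then have "L x \<le> 0" unfolding L_def
        by (simp add: mult_right_mono)
      then show ?thesis using False U0 by (simp add: G_def)
    qed
  qed
  have meas: "G \<in> borel_measurable (lebesgue_on {0..})"
  proof -
    have "(\<lambda>x::real. if 0 \<le> x \<and> x \<le> 1/4 then x powr (-1/2) * (1+x) powr (-k) / (1 - 3*x) else 0) \<in> borel_measurable borel"
      by measurable
    moreover have "G = (\<lambda>x::real. if 0 \<le> x \<and> x \<le> 1/4 then x powr (-1/2) * (1+x) powr (-k) / (1 - 3*x) else 0)"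
      by (auto simp: fun_eq_iff G_def gK_def)
    ultimately show ?thesis using borel_to_lebesgue_on by metis
  qed
  have GI: "G integrable_on {0..}"
    by (rule measurable_bounded_by_integrable_imp_integrable_real[OF meas _ _ ])
       (use HU pw in auto)
  have sub: "{0..1/4::real} \<subseteq> {0..}" by auto
  have GI2: "(G has_integral integral {0..} G) {0..}" using GI by (simp add: has_integral_integral)
  then have GK: "(gK k has_integral integral {0..} G) {0..1/4}"
    using has_integral_restrict[OF sub, of "gK k"] unfolding G_def by simp
  then show "gK k integrable_on {0..1/4}" by blast
  have eqI: "integral {0..1/4} (gK k) = integral {0..} G" using GK by (rule integral_unique)
  show "integral {0..1/4} (gK k) \<ge> Gamma (1/2) / k powr (1/2) - 4 * (Gamma (3/2) / k powr (3/2))"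
    unfolding eqI using HL GI2 pw by (intro has_integral_le[OF HL GI2]) auto
  show "integral {0..1/4} (gK k) \<le> Gamma (1/2) / k powr (1/2) + 12 * (Gamma (3/2) / k powr (3/2))
        + 4*k * (Gamma (5/2) / (3*k/4) powr (5/2))"
    unfolding eqI using HU GI2 pw by (intro has_integral_le[OF GI2 HU]) (meson abs_ge_self order_trans)
qed



lemma aux_cancel: "A \<noteq> 0 \<Longrightarrow> B \<noteq> 0 \<Longrightarrow> (A::real)*B*(C/A*(D/B)/s) = C*D/s"
  by (simp add: field_simps)

lemma gK_transform:
  assumes k: "k > 0" and s: "1/4 \<le> s" "s \<le> 1"
  shows "3 powr (-1/2 - k) * gK k (-1/3 * s + 1/3) = 1 / (s * sqrt (1 - s) * (4 - s) powr k)"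
proof (cases "s = 1")
  case True then show ?thesis by (simp add: gK_def)
next
  case False
  then have s1: "s < 1" using s by simp
  have x: "-1/3 * s + 1/3 = (1-s)/3" by simp
  have a1: "1 + (1-s)/3 = (4-s)/3" by (simp add: diff_divide_distrib add_divide_distrib)
  have a2: "1 - 3*((1-s)/3) = s" by (simp add: diff_divide_distrib)
  note a = a1 a2
  have p1: "((1-s)/3) powr (-1/2) = (1-s) powr (-1/2) / 3 powr (-1/2)"
    using s1 by (simp add: powr_divide)
  have p2: "((4-s)/3) powr (-k) = (4-s) powr (-k) / 3 powr (-k)"
    using s by (simp add: powr_divide)
  have p3: "3 powr (-1/2 - k) = 3 powr (-1/2) * 3 powr (-k)" by (simp add: powr_add[symmetric])
  have p4: "(1-s) powr (-1/2) = 1 / sqrt (1-s)"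
    using s1 powr_minus_divide[of "1-s" "1/2"] powr_half_sqrt[of "1-s"] by simp
  have p5: "(4-s) powr (-k) = 1 / (4-s) powr k" by (simp add: powr_minus divide_inverse)
  have "3 powr (-1/2 - k) * gK k (-1/3 * s + 1/3)
      = 3 powr (-1/2) * 3 powr (-k) * ((1-s) powr (-1/2) / 3 powr (-1/2) * ((4-s) powr (-k) / 3 powr (-k)) / s)"
    unfolding x gK_def a p1 p2 p3 by (rule refl)
  also have "\<dots> = (1-s) powr (-1/2) * (4-s) powr (-k) / s"
    by (rule aux_cancel) simp_all
  also have "\<dots> = 1 / (s * sqrt (1 - s) * (4 - s) powr k)" unfolding p4 p5 by simp
  finally show ?thesis .
qed

lemma I_eq:
  assumes k: "k > 0"
  shows "((\<lambda>s. 1 / (s * sqrt (1 - s) * (4 - s) powr k)) has_integral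
            3 powr (1/2 - k) * integral {0..1/4} (gK k)) {1/4..1}"
proof -
  have H: "((\<lambda>x. 3 powr (-1/2 - k) * gK k x) has_integral 3 powr (-1/2 - k) * integral {0..1/4} (gK k)) (cbox 0 (1/4))"
    using K_bounds(1)[OF k] by (intro has_integral_mult_right) (simp add: has_integral_integral)
  have img: "(\<lambda>x. (1 / (-1/3)) *\<^sub>R x + - ((1 / (-1/3)) *\<^sub>R (1/3))) ` cbox 0 (1/4) = {1/4..1::real}"
    using image_affinity_atLeastAtMost[of "-3" 1 0 "1/4"] by simp
  from has_integral_affinity[OF H, of "-1/3" "1/3"] img
  have "((\<lambda>s. 3 powr (-1/2 - k) * gK k (-1/3 * s + 1/3)) has_integral 3 * (3 powr (-1/2 - k) * integral {0..1/4} (gK k))) {1/4..1}"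
    by simp
  moreover have E3: "3 * (3 powr (-1/2 - k) * integral {0..1/4} (gK k)) = 3 powr (1/2 - k) * integral {0..1/4} (gK k)"
  proof -
    have "3 * 3 powr (-1/2 - k) = 3 powr (1/2 - k)"
      using powr_add[of 3 1 "-1/2-k"] by simp
    then show ?thesis by simp
  qed
  ultimately have H2: "((\<lambda>s. 3 powr (-1/2 - k) * gK k (-1/3 * s + 1/3)) has_integral 3 powr (1/2 - k) * integral {0..1/4} (gK k)) {1/4..1}"
    by (simp only: E3)
  have "\<And>s. s \<in> {1/4..1} \<Longrightarrow> 3 powr (-1/2 - k) * gK k (-1/3 * s + 1/3) = 1 / (s * sqrt (1 - s) * (4 - s) powr k)"
    using gK_transform[OF k] by auto
  from has_integral_eq[OF this H2] show ?thesis .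
qed



lemma wamgm_ln:
  fixes a b t :: real
  assumes a: "a > 0" and b: "b > 0" and t: "0 \<le> t" "t \<le> 1"
  shows "(1 - t) * ln a + t * ln b \<le> ln ((1 - t) * a + t * b)"
proof -
  have "exp ((1 - t) * ln a + t * ln b) \<le> (1 - t) * exp (ln a) + t * exp (ln b)"
    using convex_onD[OF exp_convex, of t "ln a" "ln b"] t by simp
  also have "\<dots> = (1 - t) * a + t * b" using a b by simp
  finally have E: "exp ((1 - t) * ln a + t * ln b) \<le> (1 - t) * a + t * b" .
  have "0 < (1 - t) * a + t * b" using a b t
    by (cases "t = 1") (auto intro: add_pos_nonneg add_nonneg_pos)
  then show ?thesis using E
    by (metis exp_gt_zero ln_exp ln_le_cancel_iff)
qed

lemma pw_part1:
  fixes n D u t :: real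
  assumes D: "D \<ge> 0" and n: "n > D" and u: "u \<ge> 0" and t: "1/4 \<le> t" "t \<le> 1"
  shows "(1+4*u) powr n * (t powr (n-1) / (sqrt (1-t) * (1+u*t) powr (2*n - D)))
     \<le> 2 powr (2*n - D) * ((1 - 2*D/(2*n)) powr (n - D) / (1 - 2*D/(4*n)) powr (2*n - D))
        * (1 / (t * sqrt (1 - t) * (4 - t) powr (n - D)))"
proof (cases "t = 1")
  case True then show ?thesis by simp
next
  case False
  then have t1: "t < 1" using t by simp
  define m where "m = 2*n - D"
  define k where "k = n - D"
  have n0: "n > 0" using D n by simp
  have k0: "k > 0" using n by (simp add: k_def)
  have m0: "m > 0" using n D by (simp add: m_def)
  have mnk: "m = n + k" by (simp add: m_def k_def)
  have t0: "t > 0" using t by simp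
  define a where "a = t*(1+4*u)/n"
  define b where "b = (4-t)/k"
  have a0: "a > 0" using t0 u n0 by (simp add: a_def)
  have b0: "b > 0" using t1 k0 by (simp add: b_def)
  have W: "(1 - k/m) * ln a + (k/m) * ln b \<le> ln ((1 - k/m) * a + (k/m) * b)"
    using wamgm_ln[OF a0 b0, of "k/m"] k0 m0 mnk n0 by simp
  have nm: "1 - k/m = n/m" using m0 mnk by (simp add: field_simps)
  have comb: "(1 - k/m) * a + (k/m) * b = 4*(1+u*t)/m"
    unfolding nm a_def b_def using n0 k0 m0 by (simp add: field_simps)
  have W2: "n * ln a + k * ln b \<le> m * ln (4*(1+u*t)/m)"
  proof -
    have "m * ((1 - k/m) * ln a + (k/m) * ln b) \<le> m * ln ((1 - k/m) * a + (k/m) * b)"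
      using W m0 by (simp add: mult_left_mono)
    moreover have "m * ((1 - k/m) * ln a + (k/m) * ln b) = n * ln a + k * ln b"
      unfolding nm using m0 by (simp add: field_simps)
    ultimately show ?thesis unfolding comb by simp
  qed
  have u1: "1 + 4*u > 0" "1 + u*t > 0" using u t0 by (auto intro: add_pos_nonneg)
  have la: "ln a = ln t + ln (1+4*u) - ln n" unfolding a_def using t0 u1 n0 by (simp add: ln_div ln_mult)
  have lb: "ln b = ln (4-t) - ln k" unfolding b_def using t1 k0 by (simp add: ln_div)
  have lc: "ln (4*(1+u*t)/m) = 2 * ln 2 + ln (1+u*t) - ln m"
  proof -
    have l4: "ln (4::real) = 2 * ln 2" using ln_realpow[of 2 2] by simp
    have "ln (4*(1+u*t)/m) = ln (4*(1+u*t)) - ln m" using u1 m0 by (intro ln_divide_pos) auto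
    also have "ln (4*(1+u*t)) = ln 4 + ln (1+u*t)" using u1 by (intro ln_mult_pos) auto
    finally show ?thesis using l4 by simp
  qed
  have r1: "1 - 2*D/(2*n) = k/n" using n0 by (simp add: k_def field_simps)
  have r2: "1 - 2*D/(4*n) = m/(2*n)" using n0 by (simp add: m_def field_simps)
  have key: "n * ln (1+4*u) + n * ln t - m * ln (1+u*t)
      \<le> m * ln 2 + k * (ln k - ln n) - m * (ln m - (ln 2 + ln n)) - k * ln (4 - t)"
  proof -
    have W3: "n * (ln t + ln (1+4*u) - ln n) + k * (ln (4-t) - ln k) \<le> m * (2 * ln 2 + ln (1+u*t) - ln m)"
      using W2 unfolding la lb lc .
    show ?thesis using W3 unfolding mnk by (simp add: algebra_simps)
  qed
  have st: "t * sqrt (1-t) > 0" using t0 t1 by simp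
  have L: "(1+4*u) powr n * (t powr (n-1) / (sqrt (1-t) * (1+u*t) powr m))
       = exp (n * ln (1+4*u) + n * ln t - m * ln (1+u*t)) / (t * sqrt (1-t))"
  proof -
    have "t powr (n-1) = t powr n / t" using t0 by (simp add: powr_diff)
    then show ?thesis using t0 u1
      by (simp add: powr_def exp_add exp_diff field_simps)
  qed
  have R: "2 powr m * ((k/n) powr k / (m/(2*n)) powr m) * (1 / (t * sqrt (1 - t) * (4 - t) powr k))
       = exp (m * ln 2 + k * (ln k - ln n) - m * (ln m - (ln 2 + ln n)) - k * ln (4 - t)) / (t * sqrt (1-t))"
  proof -
    have "m*(2*ln 2) = m*ln 2 + m*ln 2" by simp
    then have e2: "exp (m * (2 * ln 2)) = exp (m * ln 2) * exp (m * ln 2)" by (simp only: exp_add)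
    show ?thesis using t0 t1 n0 k0 m0
      by (simp add: powr_def exp_add exp_diff ln_div ln_mult field_simps e2)
  qed
  show ?thesis
    unfolding r1 r2 m_def[symmetric] k_def[symmetric] L R
    using key st by (simp add: divide_right_mono)
qed



lemma part1:
  fixes n u :: real and d :: nat
  assumes n: "n > real d / 2" and u: "u \<ge> 0"
  shows "scrA n d u \<le> bigA n d"
proof -
  define k where "k = n - real d / 2"
  have k0: "k > 0" using n by (simp add: k_def)
  define f where "f s = 1 / (s * sqrt (1 - s) * (4 - s) powr (n - real d / 2))" for s :: real
  define h where "h t = (1 + 4*u) powr n * (t powr (n - 1) / (sqrt (1 - t) * (1 + u*t) powr (2*n - real d / 2)))" for t :: real
  define C where "C = 2 powr (2*n - real d / 2) *
     ((1 - real d / (2*n)) powr (n - real d / 2) /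
      (1 - real d / (4*n)) powr (2*n - real d / 2))"
  have HI: "(f has_integral 3 powr (1/2 - k) * integral {0..1/4} (gK k)) {1/4..1}"
    using I_eq[OF k0] unfolding f_def k_def .
  then have fI: "f integrable_on {1/4..1}" by blast
  have CfI: "(\<lambda>t. C * f t) integrable_on {1/4..1}" using integrable_on_mult_right[OF fI] by simp
  have pw: "h t \<le> C * f t" if t: "t \<in> {1/4..1}" for t
  proof -
    have "real d / 2 \<ge> 0" by simp
    from pw_part1[OF this n u, of t] t show ?thesis
      by (simp add: h_def C_def f_def)
  qed
  have h0: "h t \<ge> 0" if t: "t \<in> {1/4..1}" for t
    using t u unfolding h_def by (intro mult_nonneg_nonneg divide_nonneg_nonneg) auto
  have meas: "h \<in> borel_measurable (lebesgue_on {1/4..1})"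
  proof -
    have "h \<in> borel_measurable borel" unfolding h_def by measurable
    then show ?thesis by (rule borel_to_lebesgue_on)
  qed
  have hI: "h integrable_on {1/4..1}"
    by (rule measurable_bounded_by_integrable_imp_integrable_real[OF meas CfI]) (use pw h0 in auto)
  have "integral {1/4..1} h \<le> integral {1/4..1} (\<lambda>t. C * f t)"
    by (rule integral_le[OF hI CfI]) (use pw in auto)
  moreover have "scrA n d u = integral {1/4..1} h"
    unfolding scrA_def h_def by (rule integral_mult_right[symmetric])
  moreover have "bigA n d = integral {1/4..1} (\<lambda>t. C * f t)"
    unfolding bigA_def C_def f_def by (rule integral_mult_right[symmetric])
  ultimately show ?thesis by simp
qed



definition Pf :: "real \<Rightarrow> real \<Rightarrow> real" where
  "Pf d n = (1 - d / (2*n)) powr (n - d / 2) / (1 - d / (4*n)) powr (2*n - d / 2)"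

lemma asym1: "(\<lambda>n::real. Pf d n * sqrt (n / (n - d/2)) - 1) \<in> O(\<lambda>n. 1/n)"
  unfolding Pf_def by real_asymp

lemma asym2: "(\<lambda>n::real. Pf d n * sqrt n * (n - d/2) powr (-3/2)) \<in> O(\<lambda>n. 1/n)"
  unfolding Pf_def by real_asymp

definition Bc :: real where
  "Bc = 16 * Gamma (3/2) + 4 * Gamma (5/2) / (3/4) powr (5/2)"

lemma aux_sum3: "(p::real) > 0 \<Longrightarrow> X \<ge> 0 \<Longrightarrow> 12*X/p + Y/p \<le> (16*X+Y)/p"
  by (simp add: field_simps)

lemma E_bound:
  assumes k: "k > 0"
  shows "\<bar>integral {0..1/4} (gK k) - sqrt pi / sqrt k\<bar> \<le> Bc / k powr (3/2)"
proof -
  have g12: "Gamma (1/2) / k powr (1/2) = sqrt pi / sqrt k"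
    using k by (simp add: Gamma_one_half_real powr_half_sqrt)
  have e3: "4*k * (Gamma (5/2) / (3*k/4) powr (5/2)) = 4 * Gamma (5/2) / (3/4) powr (5/2) / k powr (3/2)"
  proof -
    have "(3*k/4) powr (5/2) = (3/4) powr (5/2) * k powr (5/2)"
      using k by (simp add: powr_mult[symmetric])
    moreover have "k powr (5/2) = k * k powr (3/2)"
      using k powr_add[of k 1 "3/2"] by simp
    ultimately show ?thesis using k by (simp add: field_simps)
  qed
  have G3: "Gamma (3/2::real) > 0" "Gamma (5/2::real) > 0" by simp_all
  have kp: "k powr (3/2) > 0" using k by simp
  have L: "integral {0..1/4} (gK k) \<ge> sqrt pi / sqrt k - 4 * Gamma (3/2) / k powr (3/2)"
    using K_bounds(2)[OF k] g12 by simp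
  have U: "integral {0..1/4} (gK k) \<le> sqrt pi / sqrt k + 12 * Gamma (3/2) / k powr (3/2)
           + 4 * Gamma (5/2) / (3/4) powr (5/2) / k powr (3/2)"
    using K_bounds(3)[OF k] g12 e3 by simp
  have "4 * Gamma (3/2) / k powr (3/2) \<le> Bc / k powr (3/2)"
    using G3 kp unfolding Bc_def by (intro divide_right_mono) auto
  moreover have "12 * Gamma (3/2) / k powr (3/2) + 4 * Gamma (5/2) / (3/4) powr (5/2) / k powr (3/2) \<le> Bc / k powr (3/2)"
    unfolding Bc_def by (rule aux_sum3[OF kp]) (use G3 in simp)
  ultimately show ?thesis using L U by linarith
qed



lemma pow_id:
  fixes n D :: real
  shows "2 powr (2*n - D/2) * 3 powr (1/2 - (n - D/2)) = 3 powr (D/2 + 1/2) / 2 powr (D/2) * (4/3) powr n"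
proof -
  have l43: "ln (4/3::real) = 2 * ln 2 - ln 3"
  proof -
    have "ln (4/3::real) = ln 4 - ln 3" by (intro ln_divide_pos) auto
    moreover have "ln (4::real) = 2 * ln 2" using ln_realpow[of 2 2] by simp
    ultimately show ?thesis by simp
  qed
  have "2 powr (2*n - D/2) * 3 powr (1/2 - (n - D/2)) = exp ((2*n - D/2) * ln 2 + (1/2 - (n - D/2)) * ln 3)"
    by (simp add: powr_def exp_add)
  also have "(2*n - D/2) * ln 2 + (1/2 - (n - D/2)) * ln 3 = ((D/2 + 1/2) * ln 3 - (D/2) * ln 2) + n * ln (4/3)"
    unfolding l43 by (simp add: algebra_simps)
  also have "exp (((D/2 + 1/2) * ln 3 - (D/2) * ln 2) + n * ln (4/3)) = 3 powr (D/2 + 1/2) / 2 powr (D/2) * (4/3) powr n"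
    by (simp add: powr_def exp_add exp_diff)
  finally show ?thesis .
qed

definition Ef :: "real \<Rightarrow> real" where
  "Ef k = integral {0..1/4} (gK k) - sqrt pi / sqrt k"

lemma bigA_eq:
  fixes n :: real and d :: nat
  assumes n: "n > real d / 2"
  shows "bigA n d = mainA n d * (Pf (real d) n * sqrt (n / (n - real d / 2))
            + Pf (real d) n * sqrt n * Ef (n - real d / 2) / sqrt pi)"
proof -
  define k where "k = n - real d / 2"
  have k0: "k > 0" using n by (simp add: k_def)
  have n0: "n > 0" using n by (smt (verit) of_nat_0_le_iff divide_nonneg_nonneg)
  define K where "K = integral {0..1/4} (gK k)"
  have I: "integral {1/4..1} (\<lambda>s. 1 / (s * sqrt (1 - s) * (4 - s) powr (n - real d / 2))) = 3 powr (1/2 - k) * K"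
    using integral_unique[OF I_eq[OF k0]] unfolding k_def K_def .
  have B: "bigA n d = 2 powr (2*n - real d / 2) * 3 powr (1/2 - k) * Pf (real d) n * K"
    unfolding bigA_def I Pf_def by simp
  define M where "M = 3 powr (real d / 2 + 1/2) / 2 powr (real d / 2) * (4/3) powr n"
  have BM: "bigA n d = M * Pf (real d) n * K"
    unfolding B M_def k_def using pow_id[of n "real d"] by simp
  have MA: "mainA n d = M * sqrt pi / sqrt n"
    unfolding mainA_def M_def by simp
  have Kd: "K = sqrt pi / sqrt k + Ef k" unfolding Ef_def K_def by simp
  have sq: "sqrt (n / k) = sqrt n / sqrt k" by (simp add: real_sqrt_divide)
  have "mainA n d * (Pf (real d) n * sqrt (n / k) + Pf (real d) n * sqrt n * Ef k / sqrt pi)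
      = M * Pf (real d) n * (sqrt pi / sqrt k + Ef k)"
    unfolding MA sq using n0 k0 by (simp add: field_simps)
  then show ?thesis unfolding BM Kd k_def[symmetric] by simp
qed



lemma aux_n1: "(c::real) > 0 \<Longrightarrow> norm (a * b / c) = \<bar>a\<bar> * \<bar>b\<bar> / c"
  by (simp add: abs_mult)

lemma aux_n2: "(p::real) \<ge> 0 \<Longrightarrow> \<bar>a\<bar> * (B * p) / c = (B / c) * norm (a * p)"
  by (simp add: abs_mult)

theorem lemma4p4:
  fixes d :: nat
  assumes "d \<ge> 1"
  shows "(\<forall>n::real. n > real d / 2 \<longrightarrow> (\<forall>u::real. u \<ge> 0 \<longrightarrow> scrA n d u \<le> bigA n d))
    \<and> (\<exists>r :: real \<Rightarrow> real. r \<in> O[at_top](\<lambda>n. 1 / n) \<and>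
          (\<forall>\<^sub>F n in at_top. bigA n d = mainA n d * (1 + r n)))"
proof (intro conjI allI impI)
  fix n u :: real
  assume "n > real d / 2" "u \<ge> 0"
  then show "scrA n d u \<le> bigA n d" by (rule part1)
next
  define r where "r n = (Pf (real d) n * sqrt (n / (n - real d / 2)) - 1)
            + Pf (real d) n * sqrt n * Ef (n - real d / 2) / sqrt pi" for n
  have ev: "\<forall>\<^sub>F n in at_top. n > real d / 2" by (rule eventually_gt_at_top)
  have R1: "(\<lambda>n. Pf (real d) n * sqrt (n / (n - real d / 2)) - 1) \<in> O(\<lambda>n. 1/n)"
    by (rule asym1)
  have R2a: "(\<lambda>n. Pf (real d) n * sqrt n * Ef (n - real d / 2) / sqrt pi)
      \<in> O(\<lambda>n. Pf (real d) n * sqrt n * (n - real d/2) powr (-3/2))"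
  proof (rule bigoI)
    show "\<forall>\<^sub>F n in at_top. norm (Pf (real d) n * sqrt n * Ef (n - real d / 2) / sqrt pi)
        \<le> (Bc / sqrt pi) * norm (Pf (real d) n * sqrt n * (n - real d/2) powr (-3/2))"
      using ev
    proof eventually_elim
      case (elim n)
      define k where "k = n - real d / 2"
      have k0: "k > 0" using elim by (simp add: k_def)
      have Eb: "\<bar>Ef k\<bar> \<le> Bc * k powr (-3/2)"
      proof -
        have "k powr (-3/2) = 1 / k powr (3/2)" using powr_minus_divide[of k "3/2"] by simp
        then show ?thesis using E_bound[OF k0] unfolding Ef_def by simp
      qed
      have "norm (Pf (real d) n * sqrt n * Ef k / sqrt pi) = \<bar>Pf (real d) n * sqrt n\<bar> * \<bar>Ef k\<bar> / sqrt pi"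
        by (rule aux_n1) simp
      also have "\<dots> \<le> \<bar>Pf (real d) n * sqrt n\<bar> * (Bc * k powr (-3/2)) / sqrt pi"
        by (intro divide_right_mono mult_left_mono Eb) auto
      also have "\<dots> = (Bc / sqrt pi) * norm (Pf (real d) n * sqrt n * k powr (-3/2))"
        by (rule aux_n2) simp
      finally show ?case unfolding k_def .
    qed
  qed
  have R2: "(\<lambda>n. Pf (real d) n * sqrt n * Ef (n - real d / 2) / sqrt pi) \<in> O(\<lambda>n. 1/n)"
    by (rule landau_o.big_trans[OF R2a asym2])
  have "r \<in> O(\<lambda>n. 1/n)" unfolding r_def by (rule sum_in_bigo(1)[OF R1 R2])
  moreover have "\<forall>\<^sub>F n in at_top. bigA n d = mainA n d * (1 + r n)"
    using ev by eventually_elim (simp only: bigA_eq r_def, simp)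
  ultimately show "\<exists>r :: real \<Rightarrow> real. r \<in> O[at_top](\<lambda>n. 1 / n) \<and>
          (\<forall>\<^sub>F n in at_top. bigA n d = mainA n d * (1 + r n))" by blast
qed


end
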